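(* Let $G=(V,A)$ be a finite simple graph without loops with $|e|\ge 2$ for all $e\in V$, and $\mathfrak n=\mathfrak n(G)=W\oplus\mathfrak z$. Then $(\Lambda^2\mathfrak n)^{\mathfrak n}=\Lambda^2\mathfrak z$ and $\mathfrak n$ is of TST type. Consequently every Lie bialgebra cobracket $\delta$ on $\mathfrak n$ satisfies $\delta(\mathfrak z)\subseteq\Lambda^2\mathfrak z$ and $\delta(W)\subseteq (W\wedge\mathfrak z)\oplus\Lambda^2\mathfrak z$; more precisely $\delta(z)=\delta_{\mathfrak z}(z)$ and $\delta(v)=\sum_{\alpha\in A}D^\alpha(v)\wedge\alpha+\varphi(v)$ with linear maps $\delta_{\mathfrak z}:\mathfrak z\to\Lambda^2\mathfrak z$, $D^\alpha:W\to W$, $\varphi:W\to\Lambda^2\mathfrak z$ satisfying: $\delta_{\mathfrak z}$ satisfies co-Jacobi; writing $\delta_{\mathfrak z}(\gamma)=\sum_{\alpha<\beta}c_\gamma^{\alpha\beta}\alpha\wedge\beta$, $[D^\alpha,D^\beta]=\sum_\gamma c_\gamma^{\alpha\beta}D^\gamma$; $\sum_\gamma T_\gamma(x)(y)\delta_{\mathfrak z}(\gamma)=\sum_{\gamma,\eta}(T_\gamma(D^\eta x)(y)+T_\gamma(x)(D^\eta y))\gamma\wedge\eta$ for $x,y\in W$; and, writing $\varphi(v)=\sum_{\alpha<\beta}\varphi_{\alpha\beta}(v)\alpha\wedge\beta$, $\sum_\gamma\varphi(D^\gamma v)\wedge\gamma+\sum_{\alpha<\beta}\varphi_{\alpha\beta}(v)(\delta_{\mathfrak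 z}(\alpha)\wedge\beta-\alpha\wedge\delta_{\mathfrak z}(\beta))=0$ for $v\in W$.
   Context: $V=\{e_1,\dots,e_n\}$ ordered, each edge joining $e_i,e_j$ ($i<j$) oriented from $e_i$ to $e_j$, edges $A$ given a fixed total order. $\mathfrak n(G)$ over a field of characteristic zero has basis $V\cup A$, $[e_i,e_j]=\alpha$ if $\alpha$ goes from $e_i$ to $e_j$, $[e_i,e_j]=0$ if not adjacent, edges central; $W=\mathrm{span}(V)$, center $\mathfrak z=\mathrm{span}(A)$. $T_\gamma:W\to W^*$ is defined by $[v,w]=\sum_\gamma T_\gamma(v)(w)\gamma$. $\mathfrak n$ is of TST type if the only linear $S:W^*\to W$ with $T_\alpha ST_\beta+T_\beta ST_\alpha=0$ for all $\alpha,\beta\in A$ is $S=0$. Invariants are for $\mathrm{ad}_x(a\wedge b)=[x,a]\wedge b+a\wedge[x,b]$. A Lie bialgebra cobracket is a linear $\delta:\mathfrak n\to\Lambda^2\mathfrak n$ satisfying co-Jacobi ($\delta(x_1)\wedge x_2-x_1\wedge\delta(x_2)=0$, Sweedler $\delta(x)=x_1\wedge x_2$) and $\delta[x,y]=[\delta x,y]+[x,\delta y]$. *)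

theory Defs
  imports Main "HOL-Library.Product_Lexorder"
begin

text \<open>Vertices are e_0,...,e_{n-1} (naturally ordered); an edge joining e_i, e_j with i<j
  is the pair (i,j), oriented from e_i to e_j.
  Basis of n(G): Vx i (vertices) and Ed alpha (edges).\<close>

datatype gidx = Vx nat | Ed "nat \<times> nat"

definition basis :: "nat \<Rightarrow> (nat \<times> nat) set \<Rightarrow> gidx set" where
  "basis n A = Vx ` {..<n} \<union> Ed ` A"

definition unitv :: "'b \<Rightarrow> 'b \<Rightarrow> 'a::field" where
  "unitv x = (\<lambda>y. if y = x then 1 else 0)"

text \<open>Elements of Lambda^2 as antisymmetric coefficient matrices:
  omega = sum_{p<q} B p q e_p wedge e_q.\<close>
definition wedge :: "('b \<Rightarrow> 'a::field) \<Rightarrow> ('b \<Rightarrow> 'a) \<Rightarrow> 'b \<Rightarrow> 'b \<Rightarrow> 'a" where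
  "wedge a b p q = a p * b q - a q * b p"

text \<open>Elements of Lambda^3 as alternating coefficient 3-tensors.
  w21 B a = B wedge a,  w12 a B = a wedge B.\<close>
definition w21 :: "('b \<Rightarrow> 'b \<Rightarrow> 'a::field) \<Rightarrow> ('b \<Rightarrow> 'a) \<Rightarrow> 'b \<Rightarrow> 'b \<Rightarrow> 'b \<Rightarrow> 'a" where
  "w21 B a p q u = B p q * a u + B q u * a p + B u p * a q"

definition w12 :: "('b \<Rightarrow> 'a::field) \<Rightarrow> ('b \<Rightarrow> 'b \<Rightarrow> 'a) \<Rightarrow> 'b \<Rightarrow> 'b \<Rightarrow> 'b \<Rightarrow> 'a" where
  "w12 a B p q u = a p * B q u + a q * B u p + a u * B p q"

definition is_L2 :: "nat \<Rightarrow> (nat \<times> nat) set \<Rightarrow> (gidx \<Rightarrow> gidx \<Rightarrow> 'a::field) \<Rightarrow> bool" where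
  "is_L2 n A B \<longleftrightarrow> (\<forall>p q. B p q = - B q p) \<and> (\<forall>p q. p \<notin> basis n A \<longrightarrow> B p q = 0)"

definition in_L2z :: "nat \<Rightarrow> (nat \<times> nat) set \<Rightarrow> (gidx \<Rightarrow> gidx \<Rightarrow> 'a::field) \<Rightarrow> bool" where
  "in_L2z n A B \<longleftrightarrow> is_L2 n A B \<and> (\<forall>i q. B (Vx i) q = 0)"

definition in_WZ_L2z :: "nat \<Rightarrow> (nat \<times> nat) set \<Rightarrow> (gidx \<Rightarrow> gidx \<Rightarrow> 'a::field) \<Rightarrow> bool" where
  "in_WZ_L2z n A B \<longleftrightarrow> is_L2 n A B \<and> (\<forall>i j. B (Vx i) (Vx j) = 0)"

definition br :: "(nat \<times> nat) set \<Rightarrow> (gidx \<Rightarrow> 'a::field) \<Rightarrow> (gidx \<Rightarrow> 'a) \<Rightarrow> gidx \<Rightarrow> 'a" where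
  "br A x y p = (case p of Vx _ \<Rightarrow> 0
     | Ed \<gamma> \<Rightarrow> (if \<gamma> \<in> A then x (Vx (fst \<gamma>)) * y (Vx (snd \<gamma>)) - x (Vx (snd \<gamma>)) * y (Vx (fst \<gamma>)) else 0))"

text \<open>ad_x acting on Lambda^2 n: ad_x(a wedge b) = [x,a] wedge b + a wedge [x,b].\<close>
definition adL2 :: "nat \<Rightarrow> (nat \<times> nat) set \<Rightarrow> (gidx \<Rightarrow> 'a::field) \<Rightarrow> (gidx \<Rightarrow> gidx \<Rightarrow> 'a) \<Rightarrow> gidx \<Rightarrow> gidx \<Rightarrow> 'a" where
  "adL2 n A x B p q = (\<Sum>r\<in>basis n A. br A x (unitv r) p * B r q + B p r * br A x (unitv r) q)"

definition invariant :: "nat \<Rightarrow> (nat \<times> nat) set \<Rightarrow> (gidx \<Rightarrow> gidx \<Rightarrow> 'a::field) \<Rightarrow> bool" where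
  "invariant n A B \<longleftrightarrow> (\<forall>x. \<forall>p q. adL2 n A x B p q = 0)"

text \<open>T_gamma(x)(y) = gamma-coefficient of [x,y], for x,y in W (coordinates nat => 'a).\<close>
definition Tf :: "(nat \<times> nat) set \<Rightarrow> nat \<times> nat \<Rightarrow> (nat \<Rightarrow> 'a::field) \<Rightarrow> (nat \<Rightarrow> 'a) \<Rightarrow> 'a" where
  "Tf A \<gamma> x y = (if \<gamma> \<in> A then x (fst \<gamma>) * y (snd \<gamma>) - x (snd \<gamma>) * y (fst \<gamma>) else 0)"

text \<open>T_gamma(x) as an element of W^* (coordinates in the dual basis).\<close>
definition Tdual :: "(nat \<times> nat) set \<Rightarrow> nat \<times> nat \<Rightarrow> (nat \<Rightarrow> 'a::field) \<Rightarrow> nat \<Rightarrow> 'a" where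
  "Tdual A \<gamma> x = (\<lambda>j. Tf A \<gamma> x (unitv j))"

definition mapp :: "nat \<Rightarrow> (nat \<Rightarrow> nat \<Rightarrow> 'a::field) \<Rightarrow> (nat \<Rightarrow> 'a) \<Rightarrow> nat \<Rightarrow> 'a" where
  "mapp n M x = (\<lambda>r. \<Sum>c<n. M r c * x c)"

definition mmul :: "nat \<Rightarrow> (nat \<Rightarrow> nat \<Rightarrow> 'a::field) \<Rightarrow> (nat \<Rightarrow> nat \<Rightarrow> 'a) \<Rightarrow> nat \<Rightarrow> nat \<Rightarrow> 'a" where
  "mmul n M N r c = (\<Sum>k<n. M r k * N k c)"

text \<open>TST type: the only linear S : W^* -> W with T_a S T_b + T_b S T_a = 0 for all a,b is S = 0.\<close>
definition tst_type :: "'a::field itself \<Rightarrow> nat \<Rightarrow> (nat \<times> nat) set \<Rightarrow> bool" where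
  "tst_type _ n A \<longleftrightarrow> (\<forall>S :: nat \<Rightarrow> nat \<Rightarrow> 'a.
     (\<forall>\<alpha>\<in>A. \<forall>\<beta>\<in>A. \<forall>v w. Tf A \<alpha> (mapp n S (Tdual A \<beta> v)) w + Tf A \<beta> (mapp n S (Tdual A \<alpha> v)) w = 0)
     \<longrightarrow> (\<forall>k<n. \<forall>j<n. S k j = 0))"

text \<open>Co-Jacobi for a linear map given on a basis X: for every x with
  delta x = sum_{r<s} c_rs e_r wedge e_s, sum_{r<s} c_rs (delta(e_r) wedge e_s - e_r wedge delta(e_s)) = 0.
  Since the summand is symmetric in (r,s) and vanishes for r = s, this is written
  as the full double sum (twice the ordered sum; char 0).\<close>
definition cojac :: "'b set \<Rightarrow> ('b \<Rightarrow> 'b \<Rightarrow> 'b \<Rightarrow> 'a::field) \<Rightarrow> bool" where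
  "cojac X \<delta> \<longleftrightarrow> (\<forall>x\<in>X. \<forall>p\<in>X. \<forall>q\<in>X. \<forall>u\<in>X.
     (\<Sum>r\<in>X. \<Sum>s\<in>X. \<delta> x r s * (w21 (\<delta> r) (unitv s) p q u - w12 (unitv r) (\<delta> s) p q u)) = 0)"

text \<open>Lie bialgebra cobracket on n(G), given by its values delta(b) on basis elements b.\<close>
definition cobracket :: "nat \<Rightarrow> (nat \<times> nat) set \<Rightarrow> (gidx \<Rightarrow> gidx \<Rightarrow> gidx \<Rightarrow> 'a::field) \<Rightarrow> bool" where
  "cobracket n A \<delta> \<longleftrightarrow>
     (\<forall>x\<in>basis n A. is_L2 n A (\<delta> x)) \<and>
     cojac (basis n A) \<delta> \<and>
     (\<forall>x\<in>basis n A. \<forall>y\<in>basis n A. \<forall>p q.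
        (\<Sum>r\<in>basis n A. br A (unitv x) (unitv y) r * \<delta> r p q)
          = adL2 n A (unitv x) (\<delta> y) p q - adL2 n A (unitv y) (\<delta> x) p q)"

definition wvec :: "nat \<Rightarrow> (nat \<Rightarrow> 'a::field) \<Rightarrow> gidx \<Rightarrow> 'a" where
  "wvec n v p = (case p of Vx i \<Rightarrow> if i < n then v i else 0 | Ed _ \<Rightarrow> 0)"

definition zmat :: "(nat \<times> nat \<Rightarrow> nat \<times> nat \<Rightarrow> 'a::field) \<Rightarrow> gidx \<Rightarrow> gidx \<Rightarrow> 'a" where
  "zmat C p q = (case (p, q) of (Ed \<alpha>, Ed \<beta>) \<Rightarrow> C \<alpha> \<beta> | _ \<Rightarrow> 0)"

definition phiv :: "nat \<Rightarrow> (nat \<Rightarrow> nat \<times> nat \<Rightarrow> nat \<times> nat \<Rightarrow> 'a::field) \<Rightarrow> (nat \<Rightarrow> 'a) \<Rightarrow> nat \<times> nat \<Rightarrow> nat \<times> nat \<Rightarrow> 'a" where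
  "phiv n \<phi> w = (\<lambda>\<alpha> \<beta>. \<Sum>i<n. w i * \<phi> i \<alpha> \<beta>)"

end

theory Submission
  imports Defs
begin

lemma unitv_app: "unitv x y = (if y = x then 1 else 0)" by (simp add: unitv_def)

lemma sum_unitv_r: "finite X \<Longrightarrow> (\<Sum>s\<in>X. f s * unitv s U) = (if U \<in> X then f U else 0)"
proof -
  assume f: "finite X"
  have "(\<Sum>s\<in>X. f s * unitv s U) = (\<Sum>s\<in>X. if U = s then f s else 0)" by (rule sum.cong) (auto simp: unitv_def)
  thus ?thesis using f by simp
qed

lemma sum_unitv_l: "finite X \<Longrightarrow> (\<Sum>s\<in>X. unitv s U * f s) = (if U \<in> X then f U else 0)"
  using sum_unitv_r[of X f U] by (simp add: mult.commute)

locale G =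
  fixes n :: nat and A :: "(nat \<times> nat) set"
  assumes simple: "A \<subseteq> {(i, j). i < j \<and> j < n}"
    and deg: "\<forall>e<n. 2 \<le> card {\<alpha>\<in>A. fst \<alpha> = e \<or> snd \<alpha> = e}"
begin

lemma finA: "finite A"
  by (rule finite_subset[of _ "{..<n} \<times> {..<n}"]) (use simple in auto)

lemma A_lt: "a \<in> A \<Longrightarrow> fst a < snd a \<and> snd a < n"
  using simple by auto

lemma finB: "finite (basis n A)"
  using finA by (simp add: basis_def)

lemma sum_basis: "sum f (basis n A) = (\<Sum>k<n. f (Vx k)) + (\<Sum>\<gamma>\<in>A. f (Ed \<gamma>))"
proof -
  have "sum f (basis n A) = sum f (Vx ` {..<n}) + sum f (Ed ` A)"
    unfolding basis_def by (rule sum.union_disjoint) (use finA in auto)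
  also have "sum f (Vx ` {..<n}) = (\<Sum>k<n. f (Vx k))"
    by (subst sum.reindex) (auto simp: inj_on_def)
  also have "sum f (Ed ` A) = (\<Sum>\<gamma>\<in>A. f (Ed \<gamma>))"
    by (subst sum.reindex) (auto simp: inj_on_def)
  finally show ?thesis .
qed

lemma two_edges:
  assumes "e < n"
  shows "\<exists>a1\<in>A. \<exists>a2\<in>A. a1 \<noteq> a2 \<and> (fst a1 = e \<or> snd a1 = e) \<and> (fst a2 = e \<or> snd a2 = e)"
proof -
  define S where "S = {\<alpha>\<in>A. fst \<alpha> = e \<or> snd \<alpha> = e}"
  have c: "2 \<le> card S" using deg assms unfolding S_def by blast
  have fS: "finite S" unfolding S_def using finA by simp
  have "0 < card S" using c by linarith
  hence "S \<noteq> {}" by (simp add: card_gt_0_iff)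
  then obtain a1 where a1: "a1 \<in> S" by blast
  have "card (S - {a1}) = card S - 1" using a1 fS by (simp add: card_Diff_singleton)
  hence "0 < card (S - {a1})" using c by linarith
  hence "S - {a1} \<noteq> {}" by (simp add: card_gt_0_iff)
  then obtain a2 where a2: "a2 \<in> S - {a1}" by blast
  show ?thesis using a1 a2 unfolding S_def by blast
qed

lemma nbr_avoid:
  assumes "e < n"
  shows "\<exists>a\<in>A. (fst a = e \<and> snd a \<noteq> z) \<or> (snd a = e \<and> fst a \<noteq> z)"
proof -
  obtain a1 a2 where a: "a1 \<in> A" "a2 \<in> A" "a1 \<noteq> a2" "fst a1 = e \<or> snd a1 = e" "fst a2 = e \<or> snd a2 = e"
    using two_edges[OF assms] by blast
  have l1: "fst a1 < snd a1" "fst a2 < snd a2" using A_lt a by auto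
  show ?thesis
  proof (rule ccontr)
    assume "\<not> ?thesis"
    hence H: "\<forall>a\<in>A. (fst a = e \<longrightarrow> snd a = z) \<and> (snd a = e \<longrightarrow> fst a = z)" by blast
    have H1: "a = (e, z)" if "a \<in> A" "fst a = e" for a
    proof -
      have "snd a = z" using H that by blast
      thus ?thesis using that(2) by (simp add: prod_eq_iff)
    qed
    have H2: "a = (z, e)" if "a \<in> A" "fst a \<noteq> e" "fst a = e \<or> snd a = e" for a
    proof -
      have "snd a = e" using that(2,3) by blast
      hence "fst a = z" using H that(1) by blast
      thus ?thesis using \<open>snd a = e\<close> by (simp add: prod_eq_iff)
    qed
    show False
    proof (cases "fst a1 = e")
      case True
      hence a1: "a1 = (e, z)" using H1 a(1) by blast
      show False
      proof (cases "fst a2 = e")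
        case True
        hence "a2 = (e, z)" using H1 a(2) by blast
        thus False using a1 a(3) by simp
      next
        case False
        hence "a2 = (z, e)" using H2 a(2) a(5) by blast
        thus False using a1 l1 by simp
      qed
    next
      case False
      hence a1: "a1 = (z, e)" using H2 a(1) a(4) by blast
      show False
      proof (cases "fst a2 = e")
        case True
        hence "a2 = (e, z)" using H1 a(2) by blast
        thus False using a1 l1 by simp
      next
        case False
        hence "a2 = (z, e)" using H2 a(2) a(5) by blast
        thus False using a1 a(3) by simp
      qed
    qed
  qed
qed

lemma br_Vx[simp]: "br A x y (Vx i) = 0" by (simp add: br_def)
lemma br_EdL[simp]: "br A (unitv (Ed g)) y p = 0" by (simp add: br_def unitv_def split: gidx.split)
lemma br_EdR[simp]: "br A x (unitv (Ed g)) p = 0" by (simp add: br_def unitv_def split: gidx.split)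
lemma br_VV: "br A (unitv (Vx i)) (unitv (Vx k)) (Ed g) = Tf A g (unitv i) (unitv k)"
  by (simp add: br_def Tf_def unitv_def)

lemma Tf_unitv1: "a \<in> A \<Longrightarrow> Tf A a (unitv i) g = (if fst a = i then g (snd a) else 0) - (if snd a = i then g (fst a) else 0)"
  by (simp add: Tf_def unitv_def)
lemma Tf_notA[simp]: "a \<notin> A \<Longrightarrow> Tf A a x y = 0"
  by (simp add: Tf_def)

lemma sumbr: "(\<Sum>k<n. br A (unitv (Vx i)) (unitv (Vx k)) (Ed g) * h k) = Tf A g (unitv i) h"
proof (cases "g \<in> A")
  case True
  have "(\<Sum>k<n. br A (unitv (Vx i)) (unitv (Vx k)) (Ed g) * h k)
     = (\<Sum>k<n. (if k = snd g then (if fst g = i then h k else 0) else 0) - (if k = fst g then (if snd g = i then h k else 0) else 0))"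
    unfolding br_VV by (rule sum.cong) (auto simp: Tf_def unitv_def True)
  also have "\<dots> = Tf A g (unitv i) h"
    using True A_lt[OF True] by (simp add: sum_subtractf Tf_unitv1)
  finally show ?thesis .
qed (simp add: br_VV)

lemma sumbr': "(\<Sum>k<n. h k * br A (unitv (Vx i)) (unitv (Vx k)) (Ed g)) = Tf A g (unitv i) h"
  using sumbr[of i g h] by (simp add: mult.commute)

lemma adL2_vx: "adL2 n A (unitv (Vx i)) M p q =
   (\<Sum>k<n. br A (unitv (Vx i)) (unitv (Vx k)) p * M (Vx k) q) + (\<Sum>k<n. M p (Vx k) * br A (unitv (Vx i)) (unitv (Vx k)) q)"
  unfolding adL2_def sum_basis by (simp add: sum.distrib)

lemma adL2_EE: "adL2 n A (unitv (Vx i)) M (Ed a) (Ed b) = Tf A a (unitv i) (\<lambda>k. M (Vx k) (Ed b)) + Tf A b (unitv i) (\<lambda>k. M (Ed a) (Vx k))"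
  unfolding adL2_vx sumbr sumbr' ..
lemma adL2_EV: "adL2 n A (unitv (Vx i)) M (Ed a) (Vx t) = Tf A a (unitv i) (\<lambda>k. M (Vx k) (Vx t))"
  unfolding adL2_vx sumbr by simp
lemma adL2_VE: "adL2 n A (unitv (Vx i)) M (Vx t) (Ed b) = Tf A b (unitv i) (\<lambda>k. M (Vx t) (Vx k))"
  unfolding adL2_vx sumbr' by simp
lemma adL2_Ed: "adL2 n A (unitv (Ed g)) M p q = 0"
  unfolding adL2_def by simp

end

definition ed :: "nat \<Rightarrow> nat \<Rightarrow> nat \<times> nat" where "ed u v = (min u v, max u v)"
definition sg :: "nat \<Rightarrow> nat \<Rightarrow> 'a::field" where "sg u v = (if u < v then 1 else -1)"

lemma ed_sym: "ed u v = ed v u" by (simp add: ed_def min.commute max.commute)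
lemma sg_nz[simp]: "sg u v \<noteq> 0" by (simp add: sg_def)
lemma sg_anti: "u \<noteq> v \<Longrightarrow> sg v u = - sg u v" by (simp add: sg_def)
lemma sg_sq: "sg u v * sg u v = 1" by (simp add: sg_def)

lemma tri_alg:
  fixes a c d P Q R :: "'k::field_char_0"
  assumes "a \<noteq> 0" "c \<noteq> 0" "- a * P + d * Q = 0" "- c * P + d * R = 0" "a * R + c * Q = 0"
  shows "P = 0"
proof -
  have q: "d * Q = a * P"
  proof -
    have "d * Q = (- a * P + d * Q) + a * P" by simp
    thus ?thesis using assms(3) by simp
  qed
  have r: "d * R = c * P"
  proof -
    have "d * R = (- c * P + d * R) + c * P" by simp
    thus ?thesis using assms(4) by simp
  qed
  have "d * (a * R + c * Q) = a * (d * R) + c * (d * Q)" by (simp add: algebra_simps)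
  also have "\<dots> = (a * c) * (P + P)" unfolding q r by (simp add: algebra_simps)
  finally have "(a * c) * (P + P) = 0" using assms(5) by simp
  hence "P + P = 0" using assms(1,2) by simp
  hence "2 * P = 0" by (simp only: mult_2)
  thus ?thesis by simp
qed
context G begin

lemma A_ed: "a \<in> A \<Longrightarrow> a = ed (fst a) (snd a)"
  using A_lt[of a] by (simp add: ed_def)

lemma ed_A: "ed u v \<in> A \<Longrightarrow> u \<noteq> v \<and> u < n \<and> v < n"
  using A_lt[of "ed u v"] by (auto simp: ed_def)

lemma Tf_ed: "u \<noteq> v \<Longrightarrow> ed u v \<in> A \<Longrightarrow> Tf A (ed u v) g h = sg u v * (g u * h v - g v * h u)"
  by (cases "u < v") (auto simp: Tf_def ed_def sg_def min_def max_def algebra_simps)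

lemma Tf_ed_own: "u \<noteq> v \<Longrightarrow> ed u v \<in> A \<Longrightarrow> Tf A (ed u v) (unitv u) h = sg u v * h v"
  by (simp add: Tf_ed unitv_def)

lemma Tf_other: "w \<noteq> fst b \<Longrightarrow> w \<noteq> snd b \<Longrightarrow> Tf A b (unitv w) h = 0"
  by (simp add: Tf_def unitv_def)

lemma nbr: "e < n \<Longrightarrow> \<exists>i. i \<noteq> z \<and> i \<noteq> e \<and> ed e i \<in> A"
proof -
  assume "e < n"
  then obtain a where a: "a \<in> A" "(fst a = e \<and> snd a \<noteq> z) \<or> (snd a = e \<and> fst a \<noteq> z)"
    using nbr_avoid by blast
  have l: "fst a < snd a" using A_lt a(1) by auto
  have ac: "a = (fst a, snd a)" by simp
  show ?thesis
  proof (cases "fst a = e \<and> snd a \<noteq> z")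
    case True
    have "ed e (snd a) = (e, snd a)" using l True by (simp add: ed_def)
    also have "\<dots> = a" using True prod.collapse[of a] by metis
    finally have "ed e (snd a) \<in> A" using a(1) by simp
    moreover have "snd a \<noteq> e" using True l by simp
    moreover have "snd a \<noteq> z" using True by simp
    ultimately show ?thesis by (intro exI[of _ "snd a"] conjI)
  next
    case False
    hence f: "snd a = e" "fst a \<noteq> z" using a(2) by auto
    have "ed e (fst a) = (fst a, e)" using l f by (simp add: ed_def)
    also have "\<dots> = a" using f prod.collapse[of a] by metis
    finally have "ed e (fst a) \<in> A" using a(1) by simp
    moreover have "fst a \<noteq> e" using f l by simp
    ultimately show ?thesis using f by (intro exI[of _ "fst a"] conjI)
  qed
qed

lemma two_nbr: "e < n \<Longrightarrow> \<exists>i j. i \<noteq> j \<and> i \<noteq> e \<and> j \<noteq> e \<and> ed e i \<in> A \<and> ed e j \<in> A"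
proof -
  assume e: "e < n"
  obtain i where i: "i \<noteq> e" "ed e i \<in> A" using nbr[OF e, of e] by blast
  obtain j where j: "j \<noteq> i" "j \<noteq> e" "ed e j \<in> A" using nbr[OF e, of i] by blast
  show ?thesis using i j by blast
qed

lemma memV[simp]: "Vx m \<in> basis n A \<longleftrightarrow> m < n" by (auto simp: basis_def)
lemma memE[simp]: "Ed b \<in> basis n A \<longleftrightarrow> b \<in> A" by (auto simp: basis_def)

lemma L2z_inv:
  fixes B :: "gidx \<Rightarrow> gidx \<Rightarrow> 'k::field"
  assumes "in_L2z n A B" shows "invariant n A B"
proof -
  have z: "\<And>i q. B (Vx i) q = 0" and as: "\<And>p q. B p q = - B q p"
    using assms unfolding in_L2z_def is_L2_def by blast+
  have z2: "B p (Vx i) = 0" for p i using as[of p "Vx i"] z by simp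
  show ?thesis unfolding invariant_def adL2_def
  proof (intro allI sum.neutral ballI)
    fix x p q r assume "r \<in> basis n A"
    show "br A x (unitv r) p * B r q + B p r * br A x (unitv r) q = 0"
      by (cases r) (simp_all add: z z2)
  qed
qed

lemma L2z_of_vinv:
  fixes B :: "gidx \<Rightarrow> gidx \<Rightarrow> 'k::field_char_0"
  assumes L: "is_L2 n A B" and V: "\<forall>i<n. \<forall>p q. adL2 n A (unitv (Vx i)) B p q = 0"
  shows "in_L2z n A B"
proof -
  have as: "\<And>p q. B p q = - B q p" using L unfolding is_L2_def by blast
  have sp: "\<And>p q. p \<notin> basis n A \<Longrightarrow> B p q = 0" using L unfolding is_L2_def by blast
  have sp2: "\<And>p q. q \<notin> basis n A \<Longrightarrow> B p q = 0" using as sp by (metis minus_zero)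
  have EQ: "sg i m * B (Vx m) (Ed b) + Tf A b (unitv i) (\<lambda>k. B (Ed (ed i m)) (Vx k)) = 0"
    if "ed i m \<in> A" "i \<noteq> m" for i m b
  proof -
    have "i < n" using ed_A that by blast
    hence "adL2 n A (unitv (Vx i)) B (Ed (ed i m)) (Ed b) = 0" using V by blast
    thus ?thesis unfolding adL2_EE using Tf_ed_own[OF that(2,1), of "\<lambda>k. B (Vx k) (Ed b)"] by simp
  qed
  have EQV: "B (Vx m) (Vx t) = 0" if "ed i m \<in> A" "i \<noteq> m" for i m t
  proof -
    have "i < n" using ed_A that by blast
    hence "adL2 n A (unitv (Vx i)) B (Ed (ed i m)) (Vx t) = 0" using V by blast
    thus ?thesis unfolding adL2_EV using Tf_ed_own[OF that(2,1), of "\<lambda>k. B (Vx k) (Vx t)"] by simp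
  qed
  have VV: "B (Vx m) (Vx t) = 0" if m: "m < n" for m t
  proof -
    obtain i where "i \<noteq> m" "ed m i \<in> A" using nbr[OF m, of m] by blast
    thus ?thesis using EQV[of i m t] ed_sym by metis
  qed
  have VE0: "B (Vx m) (Ed b) = 0" if "ed i m \<in> A" "i \<noteq> m" "i \<noteq> fst b" "i \<noteq> snd b" for i m b
  proof -
    have "Tf A b (unitv i) (\<lambda>k. B (Ed (ed i m)) (Vx k)) = 0" by (rule Tf_other[OF that(3,4)])
    hence "sg i m * B (Vx m) (Ed b) = 0" using EQ[OF that(1,2), of b] by simp
    thus ?thesis by simp
  qed
  have VE: "B (Vx m) (Ed b) = 0" if m: "m < n" and b: "b \<in> A" for m b
  proof -
    define x where "x = fst b"
    define y where "y = snd b"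
    have xy: "x < y" "y < n" using A_lt b by (auto simp: x_def y_def)
    have bxy: "b = ed x y" using A_ed b by (simp add: x_def y_def)
    show ?thesis
    proof (cases "m = x \<or> m = y")
      case True
      obtain i where i: "i \<noteq> (if m = x then y else x)" "i \<noteq> m" "ed m i \<in> A" using nbr[OF m] by blast
      show ?thesis using VE0[of i m b] i True xy unfolding x_def[symmetric] y_def[symmetric]
        by (metis ed_sym less_irrefl)
    next
      case False
      obtain i j where ij: "i \<noteq> j" "i \<noteq> m" "j \<noteq> m" "ed m i \<in> A" "ed m j \<in> A" using two_nbr[OF m] by blast
      show ?thesis
      proof (cases "i \<noteq> x \<and> i \<noteq> y")
        case True thus ?thesis using VE0[of i m b] ij ed_sym unfolding x_def y_def by metis
      next
        case Fi: False
        show ?thesis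
        proof (cases "j \<noteq> x \<and> j \<noteq> y")
          case True thus ?thesis using VE0[of j m b] ij ed_sym unfolding x_def y_def by metis
        next
          case Fj: False
          have mx: "ed m x \<in> A" and my: "ed m y \<in> A" using Fi Fj ij by auto
          have dist: "m \<noteq> x" "m \<noteq> y" "x \<noteq> y" using False xy by auto
          define P where "P = B (Vx m) (Ed b)"
          define Q where "Q = B (Ed (ed m x)) (Vx y)"
          define R where "R = B (Vx x) (Ed (ed m y))"
          have bA: "ed x y \<in> A" using b bxy by simp
          have Ex: "sg x m * P + sg x y * Q = 0"
            using EQ[of x m b] mx dist Tf_ed_own[of x y] bA unfolding P_def Q_def bxy
            by (metis ed_sym)
          have Ey: "sg y m * P + sg y x * (- R) = 0"
          proof -
            have "B (Ed (ed y m)) (Vx x) = - R" unfolding R_def using as ed_sym by metis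
            thus ?thesis using EQ[of y m b] my dist Tf_ed_own[of y x] bA unfolding P_def bxy
              by (metis ed_sym)
          qed
          have Em: "sg m x * R + sg m y * Q = 0"
            using EQ[of m x "ed m y"] mx my dist Tf_ed_own[of m y] unfolding R_def Q_def
            by (metis ed_sym)
          have Ex': "- sg m x * P + sg x y * Q = 0" using Ex unfolding sg_anti[OF dist(1)] .
          have Ey': "- sg m y * P + sg x y * R = 0" using Ey unfolding sg_anti[OF dist(2)] sg_anti[OF dist(3)] by simp
          have "P = 0" by (rule tri_alg[OF sg_nz sg_nz Ex' Ey' Em])
          thus ?thesis by (simp add: P_def)
        qed
      qed
    qed
  qed
  show ?thesis unfolding in_L2z_def
  proof (intro conjI allI L)
    fix i q show "B (Vx i) q = 0"
    proof (cases "i < n")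
      case True
      show ?thesis
      proof (cases q)
        case (Vx t) thus ?thesis using VV True by simp
      next
        case (Ed b) thus ?thesis using VE[OF True, of b] sp2[of "Ed b" "Vx i"] by (cases "b \<in> A") simp_all
      qed
    qed (simp add: sp)
  qed
qed

lemma tst: "tst_type TYPE('k::field_char_0) n A"
  unfolding tst_type_def
proof (rule allI, rule impI)
  fix S :: "nat \<Rightarrow> nat \<Rightarrow> 'k"
  assume H: "\<forall>\<alpha>\<in>A. \<forall>\<beta>\<in>A. \<forall>v w. Tf A \<alpha> (mapp n S (Tdual A \<beta> v)) w + Tf A \<beta> (mapp n S (Tdual A \<alpha> v)) w = 0"
  show "\<forall>k<n. \<forall>j<n. S k j = 0"
  proof (intro allI impI)
    fix k j assume k: "k < n" and j: "j < n"
    obtain u where u: "u \<noteq> k" "u \<noteq> j" "ed j u \<in> A" using nbr[OF j, of k] by blast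
    obtain w where w: "w \<noteq> u" "w \<noteq> k" "ed k w \<in> A" using nbr[OF k, of u] by blast
    have uj: "ed u j \<in> A" using u ed_sym by metis
    have h: "Tf A (ed k w) (mapp n S (Tdual A (ed j u) (unitv u))) (unitv w)
      + Tf A (ed j u) (mapp n S (Tdual A (ed k w) (unitv u))) (unitv w) = 0"
      using H[rule_format, OF w(3) u(3), of "unitv u" "unitv w"] .
    have t1: "Tdual A (ed j u) (unitv u) = (\<lambda>j'. sg u j * (if j = j' then 1 else 0))"
    proof
      fix j' show "Tdual A (ed j u) (unitv u) j' = sg u j * (if j = j' then 1 else 0)"
        unfolding Tdual_def using Tf_ed_own[of u j "unitv j'"] uj u ed_sym[of j u] by (simp add: unitv_def)
    qed
    have m1: "mapp n S (Tdual A (ed j u) (unitv u)) = (\<lambda>r. sg u j * S r j)"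
    proof
      fix r
      have "(\<Sum>c<n. S r c * (sg u j * (if j = c then 1 else 0))) = (\<Sum>c<n. if j = c then sg u j * S r c else 0)"
        by (rule sum.cong) auto
      also have "\<dots> = sg u j * S r j" using j by simp
      finally show "mapp n S (Tdual A (ed j u) (unitv u)) r = sg u j * S r j" unfolding t1 mapp_def .
    qed
    have fk: "u \<noteq> fst (ed k w)" "u \<noteq> snd (ed k w)" using w u by (simp_all add: ed_def min_def max_def)
    have t2: "Tdual A (ed k w) (unitv u) = (\<lambda>j'. 0)"
      unfolding Tdual_def by (intro ext) (rule Tf_other[OF fk])
    have m2: "mapp n S (\<lambda>j'. 0) = (\<lambda>r. 0)" by (simp add: mapp_def)
    have z: "Tf A (ed j u) (\<lambda>r. 0) (unitv w) = 0" by (simp add: Tf_def)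
    have "Tf A (ed k w) (\<lambda>r. sg u j * S r j) (unitv w) = sg k w * (sg u j * S k j)"
    proof -
      have kw: "k \<noteq> w" using w by simp
      show ?thesis unfolding Tf_ed[OF kw w(3)] using kw by (simp add: unitv_def)
    qed
    hence "sg k w * (sg u j * S k j) = 0" using h unfolding m1 t2 m2 z by simp
    thus "S k j = 0" by simp
  qed
qed

end

lemma sum_if_eq: "finite X \<Longrightarrow> (\<Sum>s\<in>X. if a = s then f s else 0) = (if a \<in> X then f a else 0)"
  by simp

lemma cojac_simp:
  fixes \<delta> :: "'b \<Rightarrow> 'b \<Rightarrow> 'b \<Rightarrow> 'a::field"
  assumes fin: "finite X" and as: "\<And>r s. \<delta> x r s = - \<delta> x s r" and PQU: "P \<in> X" "Q \<in> X" "U \<in> X"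
  shows "(\<Sum>r\<in>X. \<Sum>s\<in>X. \<delta> x r s * (w21 (\<delta> r) (unitv s) P Q U - w12 (unitv r) (\<delta> s) P Q U))
       = 2 * (\<Sum>r\<in>X. \<delta> x r U * \<delta> r P Q + \<delta> x r P * \<delta> r Q U + \<delta> x r Q * \<delta> r U P)"
proof -
  let ?B = "\<delta> x"
  let ?T = "\<lambda>r. ?B r U * \<delta> r P Q + ?B r P * \<delta> r Q U + ?B r Q * \<delta> r U P"
  have w1: "(\<Sum>s\<in>X. ?B r s * w21 (\<delta> r) (unitv s) P Q U) = ?T r" for r
  proof -
    have "(\<Sum>s\<in>X. ?B r s * w21 (\<delta> r) (unitv s) P Q U)
      = (\<Sum>s\<in>X. (if U = s then ?B r s * \<delta> r P Q else 0) + (if P = s then ?B r s * \<delta> r Q U else 0)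
                + (if Q = s then ?B r s * \<delta> r U P else 0))"
      by (rule sum.cong) (auto simp: w21_def unitv_def distrib_left)
    also have "\<dots> = ?T r" using fin PQU by (simp add: sum.distrib)
    finally show ?thesis .
  qed
  have w2: "(\<Sum>r\<in>X. ?B r s * w12 (unitv r) (\<delta> s) P Q U) = - ?T s" for s
  proof -
    have "(\<Sum>r\<in>X. ?B r s * w12 (unitv r) (\<delta> s) P Q U)
      = (\<Sum>r\<in>X. (if P = r then ?B r s * \<delta> s Q U else 0) + (if Q = r then ?B r s * \<delta> s U P else 0)
                + (if U = r then ?B r s * \<delta> s P Q else 0))"
      by (rule sum.cong) (auto simp: w12_def unitv_def distrib_left)
    also have "\<dots> = ?B P s * \<delta> s Q U + ?B Q s * \<delta> s U P + ?B U s * \<delta> s P Q" using fin PQU by (simp add: sum.distrib)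
    also have "\<dots> = - ?T s" using as[of P s] as[of Q s] as[of U s] by (simp add: algebra_simps)
    finally show ?thesis .
  qed
  have "(\<Sum>r\<in>X. \<Sum>s\<in>X. ?B r s * (w21 (\<delta> r) (unitv s) P Q U - w12 (unitv r) (\<delta> s) P Q U))
     = (\<Sum>r\<in>X. \<Sum>s\<in>X. ?B r s * w21 (\<delta> r) (unitv s) P Q U) - (\<Sum>r\<in>X. \<Sum>s\<in>X. ?B r s * w12 (unitv r) (\<delta> s) P Q U)"
    by (simp add: right_diff_distrib sum_subtractf)
  also have "(\<Sum>r\<in>X. \<Sum>s\<in>X. ?B r s * w12 (unitv r) (\<delta> s) P Q U) = (\<Sum>s\<in>X. \<Sum>r\<in>X. ?B r s * w12 (unitv r) (\<delta> s) P Q U)"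
    by (rule sum.swap)
  also have "\<dots> = (\<Sum>s\<in>X. - ?T s)" using w2 by simp
  also have "\<dots> = - (\<Sum>s\<in>X. ?T s)" by (rule sum_negf)
  also have "(\<Sum>r\<in>X. \<Sum>s\<in>X. ?B r s * w21 (\<delta> r) (unitv s) P Q U) = (\<Sum>r\<in>X. ?T r)" using w1 by simp
  finally show ?thesis by (simp only: diff_minus_eq_add mult_2)
qed

definition lin1 :: "nat \<Rightarrow> ((nat \<Rightarrow> 'a::field) \<Rightarrow> 'a) \<Rightarrow> bool" where
  "lin1 n F1 \<longleftrightarrow> (\<forall>x. F1 x = (\<Sum>i<n. x i * F1 (unitv i)))"

lemma lin1D: "lin1 n F1 \<Longrightarrow> F1 x = (\<Sum>i<n. x i * F1 (unitv i))"
  unfolding lin1_def by blast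

lemma lin1_add: assumes "lin1 n F1" "lin1 n F2" shows "lin1 n (\<lambda>x. F1 x + F2 x)"
  unfolding lin1_def
proof
  fix x
  have "F1 x = (\<Sum>i<n. x i * F1 (unitv i))" "F2 x = (\<Sum>i<n. x i * F2 (unitv i))"
    using lin1D[OF assms(1)] lin1D[OF assms(2)] by blast+
  thus "F1 x + F2 x = (\<Sum>i<n. x i * (F1 (unitv i) + F2 (unitv i)))" by (simp add: distrib_left sum.distrib)
qed
lemma lin1_diff: assumes "lin1 n F1" "lin1 n F2" shows "lin1 n (\<lambda>x. F1 x - F2 x)"
  unfolding lin1_def
proof
  fix x
  have "F1 x = (\<Sum>i<n. x i * F1 (unitv i))" "F2 x = (\<Sum>i<n. x i * F2 (unitv i))"
    using lin1D[OF assms(1)] lin1D[OF assms(2)] by blast+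
  thus "F1 x - F2 x = (\<Sum>i<n. x i * (F1 (unitv i) - F2 (unitv i)))" by (simp add: right_diff_distrib sum_subtractf)
qed
lemma lin1_cmul: assumes "lin1 n F1" shows "lin1 n (\<lambda>x. F1 x * c)"
  unfolding lin1_def
proof
  fix x
  have "F1 x = (\<Sum>i<n. x i * F1 (unitv i))" using lin1D[OF assms(1)] by blast
  thus "F1 x * c = (\<Sum>i<n. x i * (F1 (unitv i) * c))" by (simp add: sum_distrib_right mult.assoc)
qed
lemma lin1_mulc: assumes "lin1 n F1" shows "lin1 n (\<lambda>x. c * F1 x)"
  unfolding lin1_def
proof
  fix x
  have "F1 x = (\<Sum>i<n. x i * F1 (unitv i))" using lin1D[OF assms(1)] by blast
  thus "c * F1 x = (\<Sum>i<n. x i * (c * F1 (unitv i)))" by (simp add: sum_distrib_left mult.left_commute)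
qed
lemma lin1_sum: assumes "finite S" "\<And>g. g \<in> S \<Longrightarrow> lin1 n (F1 g)" shows "lin1 n (\<lambda>x. \<Sum>g\<in>S. F1 g x)"
  unfolding lin1_def
proof
  fix x
  have "(\<Sum>g\<in>S. F1 g x) = (\<Sum>g\<in>S. \<Sum>i<n. x i * F1 g (unitv i))"
    by (rule sum.cong[OF refl]) (rule lin1D[OF assms(2)])
  also have "\<dots> = (\<Sum>i<n. \<Sum>g\<in>S. x i * F1 g (unitv i))" by (rule sum.swap)
  also have "\<dots> = (\<Sum>i<n. x i * (\<Sum>g\<in>S. F1 g (unitv i)))" by (simp add: sum_distrib_left)
  finally show "(\<Sum>g\<in>S. F1 g x) = (\<Sum>i<n. x i * (\<Sum>g\<in>S. F1 g (unitv i)))" .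
qed
lemma lin1_const0: "lin1 n (\<lambda>x. 0)" unfolding lin1_def by simp

lemma lin1_zero:
  assumes "lin1 n F1" "\<And>i. i < n \<Longrightarrow> F1 (unitv i) = 0" shows "F1 x = 0"
proof -
  have "F1 x = (\<Sum>i<n. x i * F1 (unitv i))" using lin1D[OF assms(1)] by blast
  also have "\<dots> = 0" using assms(2) by simp
  finally show ?thesis .
qed

lemma sum_mult_delta: "(\<Sum>i<(n::nat). x i * (if a = i then c else 0::'a::field)) = (if a < n then x a * c else 0)"
proof -
  have "(\<Sum>i<n. x i * (if a = i then c else 0)) = (\<Sum>i<n. if a = i then x i * c else 0)"
    by (rule sum.cong) auto
  thus ?thesis by (cases "a < n") simp_all
qed

lemma mapp_lin: "lin1 n (\<lambda>x. mapp n M x r)"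
  unfolding lin1_def mapp_def
proof
  fix x
  have "(\<Sum>i<n. x i * (\<Sum>c<n. M r c * unitv i c)) = (\<Sum>i<n. x i * M r i)"
  proof (rule sum.cong[OF refl])
    fix i assume "i \<in> {..<n}"
    have "(\<Sum>c<n. M r c * unitv i c) = (\<Sum>c<n. if i = c then M r c else 0)"
      by (rule sum.cong) (auto simp: unitv_def)
    thus "x i * (\<Sum>c<n. M r c * unitv i c) = x i * M r i" using \<open>i \<in> {..<n}\<close> by simp
  qed
  thus "(\<Sum>c<n. M r c * x c) = (\<Sum>i<n. x i * (\<Sum>c<n. M r c * unitv i c))" by (simp add: mult.commute)
qed

lemma mapp_unitv: "j < n \<Longrightarrow> mapp n M (unitv j) = (\<lambda>r. M r j)"
proof
  fix r assume j: "j < n"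
  have "(\<Sum>c<n. M r c * unitv j c) = (\<Sum>c<n. if j = c then M r c else 0)"
    by (rule sum.cong) (auto simp: unitv_def)
  thus "mapp n M (unitv j) r = M r j" using j by (simp add: mapp_def)
qed

context G begin

lemma lin_Tf1: "lin1 n (\<lambda>x. Tf A g x y)"
  unfolding lin1_def
proof
  fix x show "Tf A g x y = (\<Sum>i<n. x i * Tf A g (unitv i) y)"
  proof (cases "g \<in> A")
    case True
    have l: "fst g < n" "snd g < n" using A_lt[OF True] by auto
    have "(\<Sum>i<n. x i * Tf A g (unitv i) y) = (\<Sum>i<n. x i * (if fst g = i then y (snd g) else 0)) - (\<Sum>i<n. x i * (if snd g = i then y (fst g) else 0))"
      by (simp add: Tf_unitv1[OF True] right_diff_distrib sum_subtractf)
    also have "\<dots> = Tf A g x y" unfolding sum_mult_delta using l True by (simp add: Tf_def)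
    finally show ?thesis ..
  qed simp
qed

lemma Tf_anti: "Tf A g x y = - Tf A g y x" by (simp add: Tf_def algebra_simps)

lemma lin_Tf2: "lin1 n (\<lambda>y. Tf A g x y)"
  unfolding lin1_def
proof
  fix y
  have "Tf A g x y = - Tf A g y x" by (rule Tf_anti)
  also have "Tf A g y x = (\<Sum>i<n. y i * Tf A g (unitv i) x)" using lin1D[OF lin_Tf1] by blast
  also have "- \<dots> = (\<Sum>i<n. y i * Tf A g x (unitv i))"
    by (simp add: sum_negf[symmetric]) (metis Tf_anti mult_minus_right)
  finally show "Tf A g x y = (\<Sum>i<n. y i * Tf A g x (unitv i))" .
qed

lemma lin_comp:
  assumes "lin1 n F1" "\<And>r. lin1 n (\<lambda>x. L x r)"
  shows "lin1 n (\<lambda>x. F1 (L x))"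
  unfolding lin1_def
proof
  fix x
  have "F1 (L x) = (\<Sum>r<n. L x r * F1 (unitv r))" by (rule lin1D[OF assms(1)])
  also have "\<dots> = (\<Sum>r<n. (\<Sum>i<n. x i * L (unitv i) r) * F1 (unitv r))"
    by (rule sum.cong[OF refl]) (subst lin1D[OF assms(2)], rule refl)
  also have "\<dots> = (\<Sum>r<n. \<Sum>i<n. x i * (L (unitv i) r * F1 (unitv r)))"
    by (simp add: sum_distrib_right mult.assoc)
  also have "\<dots> = (\<Sum>i<n. \<Sum>r<n. x i * (L (unitv i) r * F1 (unitv r)))"
    by (rule sum.swap)
  also have "\<dots> = (\<Sum>i<n. x i * (\<Sum>r<n. L (unitv i) r * F1 (unitv r)))"
    by (simp add: sum_distrib_left)
  also have "\<dots> = (\<Sum>i<n. x i * F1 (L (unitv i)))"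
    by (rule sum.cong[OF refl]) (subst (2) lin1D[OF assms(1)], rule refl)
  finally show "F1 (L x) = (\<Sum>i<n. x i * F1 (L (unitv i)))" .
qed

lemma lin_Tfm1: "lin1 n (\<lambda>x. Tf A g (mapp n M x) y)"
  by (rule lin_comp[OF lin_Tf1 mapp_lin])
lemma lin_Tfm2: "lin1 n (\<lambda>y. Tf A g x (mapp n M y))"
  by (rule lin_comp[OF lin_Tf2 mapp_lin])

end

definition dz :: "(gidx \<Rightarrow> gidx \<Rightarrow> gidx \<Rightarrow> 'k) \<Rightarrow> nat \<times> nat \<Rightarrow> nat \<times> nat \<Rightarrow> nat \<times> nat \<Rightarrow> 'k" where
  "dz \<delta> \<gamma> \<alpha> \<beta> = \<delta> (Ed \<gamma>) (Ed \<alpha>) (Ed \<beta>)"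
definition DD :: "(gidx \<Rightarrow> gidx \<Rightarrow> gidx \<Rightarrow> 'k) \<Rightarrow> nat \<times> nat \<Rightarrow> nat \<Rightarrow> nat \<Rightarrow> 'k" where
  "DD \<delta> \<alpha> r i = \<delta> (Vx i) (Vx r) (Ed \<alpha>)"
definition ph :: "(gidx \<Rightarrow> gidx \<Rightarrow> gidx \<Rightarrow> 'k) \<Rightarrow> nat \<Rightarrow> nat \<times> nat \<Rightarrow> nat \<times> nat \<Rightarrow> 'k" where
  "ph \<delta> i \<alpha> \<beta> = \<delta> (Vx i) (Ed \<alpha>) (Ed \<beta>)"

locale C = G +
  fixes \<delta> :: "gidx \<Rightarrow> gidx \<Rightarrow> gidx \<Rightarrow> 'k::field_char_0"
  assumes cob: "cobracket n A \<delta>"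
begin

lemma L2d: "x \<in> basis n A \<Longrightarrow> is_L2 n A (\<delta> x)"
  using cob unfolding cobracket_def by blast
lemma asd: "x \<in> basis n A \<Longrightarrow> \<delta> x p q = - \<delta> x q p"
  using L2d unfolding is_L2_def by blast
lemma spd: "x \<in> basis n A \<Longrightarrow> p \<notin> basis n A \<Longrightarrow> \<delta> x p q = 0"
  using L2d unfolding is_L2_def by blast
lemma spd2: "x \<in> basis n A \<Longrightarrow> q \<notin> basis n A \<Longrightarrow> \<delta> x p q = 0"
  using asd spd by (metis minus_zero)
lemma CC: "x \<in> basis n A \<Longrightarrow> y \<in> basis n A \<Longrightarrow>
  (\<Sum>r\<in>basis n A. br A (unitv x) (unitv y) r * \<delta> r p q) = adL2 n A (unitv x) (\<delta> y) p q - adL2 n A (unitv y) (\<delta> x) p q"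
  using cob unfolding cobracket_def by blast
lemma CJ: "cojac (basis n A) \<delta>"
  using cob unfolding cobracket_def by blast

lemma edge_L2z: assumes g: "g \<in> A" shows "in_L2z n A (\<delta> (Ed g))"
proof (rule L2z_of_vinv[OF L2d])
  show "Ed g \<in> basis n A" using g by simp
  show "\<forall>i<n. \<forall>p q. adL2 n A (unitv (Vx i)) (\<delta> (Ed g)) p q = 0"
  proof (intro allI impI)
    fix i p q assume i: "i < n"
    have "(\<Sum>r\<in>basis n A. br A (unitv (Vx i)) (unitv (Ed g)) r * \<delta> r p q) = 0" by simp
    thus "adL2 n A (unitv (Vx i)) (\<delta> (Ed g)) p q = 0"
      using CC[of "Vx i" "Ed g" p q] i g by (simp add: adL2_Ed)
  qed
qed

lemma EV0: "g \<in> A \<Longrightarrow> \<delta> (Ed g) (Vx k) q = 0"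
  using edge_L2z unfolding in_L2z_def by blast
lemma EV0': "g \<in> A \<Longrightarrow> \<delta> (Ed g) p (Vx k) = 0"
  using EV0[of g k p] asd[of "Ed g" p "Vx k"] by simp

lemma vv0_key:
  assumes i: "i < n" and w: "w \<noteq> i" and ji: "j \<noteq> i" and jo: "j \<noteq> w" and e: "ed j w \<in> A"
  shows "\<delta> (Vx i) (Vx w) (Vx c) = 0"
proof -
  have jn: "j < n" using ed_A[OF e] by simp
  have "(\<Sum>r\<in>basis n A. br A (unitv (Vx j)) (unitv (Vx i)) r * \<delta> r (Ed (ed j w)) (Vx c)) = 0"
    unfolding sum_basis by (simp add: EV0')
  hence "adL2 n A (unitv (Vx j)) (\<delta> (Vx i)) (Ed (ed j w)) (Vx c) - adL2 n A (unitv (Vx i)) (\<delta> (Vx j)) (Ed (ed j w)) (Vx c) = 0"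
    using CC[of "Vx j" "Vx i" "Ed (ed j w)" "Vx c"] i jn by simp
  moreover have "adL2 n A (unitv (Vx j)) (\<delta> (Vx i)) (Ed (ed j w)) (Vx c) = sg j w * \<delta> (Vx i) (Vx w) (Vx c)"
    unfolding adL2_EV using Tf_ed_own[OF jo e, of "\<lambda>k. \<delta> (Vx i) (Vx k) (Vx c)"] by simp
  moreover have "adL2 n A (unitv (Vx i)) (\<delta> (Vx j)) (Ed (ed j w)) (Vx c) = 0"
    unfolding adL2_EV
  proof (rule Tf_other)
    show "i \<noteq> fst (ed j w)" "i \<noteq> snd (ed j w)" using ji w by (auto simp: ed_def min_def max_def)
  qed
  ultimately show ?thesis by simp
qed

lemma vv0: assumes i: "i < n" shows "\<delta> (Vx i) (Vx a) (Vx b) = 0"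
proof -
  have gen: "\<delta> (Vx i) (Vx w) (Vx c) = 0" if "w \<noteq> i" for w c
  proof (cases "w < n")
    case True
    obtain j where "j \<noteq> i" "j \<noteq> w" "ed w j \<in> A" using nbr[OF True, of i] by blast
    thus ?thesis using vv0_key[OF i that, of j c] ed_sym by metis
  next
    case False thus ?thesis using spd[of "Vx i" "Vx w" "Vx c"] i by simp
  qed
  show ?thesis
  proof (cases "a = i")
    case False thus ?thesis using gen by blast
  next
    case True
    show ?thesis
    proof (cases "b = i")
      case False
      have "\<delta> (Vx i) (Vx a) (Vx b) = - \<delta> (Vx i) (Vx b) (Vx a)" by (rule asd) (simp add: i)
      thus ?thesis using gen[OF False, of a] by simp
    next
      case True
      have "\<delta> (Vx i) (Vx i) (Vx i) = - \<delta> (Vx i) (Vx i) (Vx i)" by (rule asd) (simp add: i)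
      hence "\<delta> (Vx i) (Vx i) (Vx i) + \<delta> (Vx i) (Vx i) (Vx i) = 0" by (simp add: eq_neg_iff_add_eq_0)
      hence "2 * \<delta> (Vx i) (Vx i) (Vx i) = 0" by (simp only: mult_2)
      thus ?thesis using \<open>a = i\<close> True by simp
    qed
  qed
qed

lemma rep_E: "g \<in> A \<Longrightarrow> \<delta> (Ed g) = zmat (dz \<delta> g)"
proof (intro ext)
  fix p q assume g: "g \<in> A"
  show "\<delta> (Ed g) p q = zmat (dz \<delta> g) p q"
    by (cases p; cases q) (simp_all add: zmat_def dz_def EV0[OF g] EV0'[OF g])
qed

lemma rep_V: assumes i: "i < n"
  shows "\<delta> (Vx i) = (\<lambda>p q. (\<Sum>\<alpha>\<in>A. wedge (wvec n (\<lambda>r. DD \<delta> \<alpha> r i)) (unitv (Ed \<alpha>)) p q) + zmat (ph \<delta> i) p q)"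
proof (intro ext)
  fix p q
  have bi: "Vx i \<in> basis n A" using i by simp
  have VE: "(\<Sum>\<alpha>\<in>A. wedge (wvec n (\<lambda>r. DD \<delta> \<alpha> r i)) (unitv (Ed \<alpha>)) (Vx r) (Ed b)) = \<delta> (Vx i) (Vx r) (Ed b)" for r b
  proof -
    have "(\<Sum>\<alpha>\<in>A. wedge (wvec n (\<lambda>r. DD \<delta> \<alpha> r i)) (unitv (Ed \<alpha>)) (Vx r) (Ed b))
        = (\<Sum>\<alpha>\<in>A. if b = \<alpha> then (if r < n then DD \<delta> \<alpha> r i else 0) else 0)"
      by (rule sum.cong) (auto simp: wedge_def wvec_def unitv_def)
    also have "\<dots> = (if b \<in> A then (if r < n then DD \<delta> b r i else 0) else 0)" using finA by simp
    also have "\<dots> = \<delta> (Vx i) (Vx r) (Ed b)"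
    proof (cases "b \<in> A \<and> r < n")
      case True thus ?thesis by (simp add: DD_def)
    next
      case False
      hence "\<delta> (Vx i) (Vx r) (Ed b) = 0"
      proof (cases "r < n")
        case True
        hence "Ed b \<notin> basis n A" using False by simp
        thus ?thesis by (rule spd2[OF bi])
      next
        case False
        hence "Vx r \<notin> basis n A" by simp
        thus ?thesis by (rule spd[OF bi])
      qed
      thus ?thesis using False by auto
    qed
    finally show ?thesis .
  qed
  show "\<delta> (Vx i) p q = (\<Sum>\<alpha>\<in>A. wedge (wvec n (\<lambda>r. DD \<delta> \<alpha> r i)) (unitv (Ed \<alpha>)) p q) + zmat (ph \<delta> i) p q"
  proof (cases p)
    case (Vx r)
    show ?thesis
    proof (cases q)
      case (Vx s)
      have "(\<Sum>\<alpha>\<in>A. wedge (wvec n (\<lambda>r. DD \<delta> \<alpha> r i)) (unitv (Ed \<alpha>)) p q) = 0"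
        unfolding \<open>p = Vx r\<close> Vx by (rule sum.neutral) (simp add: wedge_def unitv_def)
      thus ?thesis using vv0[OF i] \<open>p = Vx r\<close> Vx by (simp add: zmat_def)
    next
      case (Ed b)
      thus ?thesis using VE[of r b] \<open>p = Vx r\<close> by (simp add: zmat_def)
    qed
  next
    case (Ed a)
    show ?thesis
    proof (cases q)
      case (Vx s)
      have "(\<Sum>\<alpha>\<in>A. wedge (wvec n (\<lambda>r. DD \<delta> \<alpha> r i)) (unitv (Ed \<alpha>)) (Ed a) (Vx s))
          = - (\<Sum>\<alpha>\<in>A. wedge (wvec n (\<lambda>r. DD \<delta> \<alpha> r i)) (unitv (Ed \<alpha>)) (Vx s) (Ed a))"
        by (simp add: sum_negf[symmetric] wedge_def)
      also have "\<dots> = \<delta> (Vx i) (Ed a) (Vx s)" using VE[of s a] asd[OF bi, of "Ed a" "Vx s"] by simp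
      finally show ?thesis using \<open>p = Ed a\<close> Vx by (simp add: zmat_def)
    next
      case (Ed b)
      have "(\<Sum>\<alpha>\<in>A. wedge (wvec n (\<lambda>r. DD \<delta> \<alpha> r i)) (unitv (Ed \<alpha>)) p q) = 0"
        unfolding \<open>p = Ed a\<close> Ed by (rule sum.neutral) (simp add: wedge_def wvec_def)
      thus ?thesis using \<open>p = Ed a\<close> Ed by (simp add: zmat_def ph_def)
    qed
  qed
qed

end

lemma self_neg_zero: "(z::'a::field_char_0) = - z \<Longrightarrow> z = 0"
proof -
  assume "z = - z"
  hence "z + z = 0" by (simp add: eq_neg_iff_add_eq_0)
  hence "2 * z = 0" by (simp only: mult_2)
  thus "z = 0" by simp
qed

lemma lt_sum:
  fixes \<phi> X :: "'b::linorder \<Rightarrow> 'b \<Rightarrow> 'a::field_char_0"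
  assumes fin: "finite S" and as: "\<And>a b. \<phi> a b = - \<phi> b a"
  shows "(\<Sum>a\<in>S. \<Sum>b\<in>S. if a < b then \<phi> a b * (X a b - X b a) else 0) = (\<Sum>a\<in>S. \<Sum>b\<in>S. \<phi> a b * X a b)"
proof -
  have d: "\<phi> a a = 0" for a by (rule self_neg_zero) (rule as)
  have "(\<Sum>a\<in>S. \<Sum>b\<in>S. if a < b then \<phi> a b * (X a b - X b a) else 0)
      = (\<Sum>a\<in>S. \<Sum>b\<in>S. if a < b then \<phi> a b * X a b else 0) - (\<Sum>a\<in>S. \<Sum>b\<in>S. if a < b then \<phi> a b * X b a else 0)"
  proof -
    have "(\<Sum>a\<in>S. \<Sum>b\<in>S. if a < b then \<phi> a b * (X a b - X b a) else 0)
      = (\<Sum>a\<in>S. \<Sum>b\<in>S. (if a < b then \<phi> a b * X a b else 0) - (if a < b then \<phi> a b * X b a else 0))"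
      by (intro sum.cong refl) (simp add: right_diff_distrib)
    thus ?thesis by (simp add: sum_subtractf)
  qed
  also have "(\<Sum>a\<in>S. \<Sum>b\<in>S. if a < b then \<phi> a b * X b a else 0) = (\<Sum>b\<in>S. \<Sum>a\<in>S. if a < b then \<phi> a b * X b a else 0)"
    by (rule sum.swap)
  also have "(\<Sum>a\<in>S. \<Sum>b\<in>S. if a < b then \<phi> a b * X a b else 0) - (\<Sum>b\<in>S. \<Sum>a\<in>S. if a < b then \<phi> a b * X b a else 0)
     = (\<Sum>a\<in>S. \<Sum>b\<in>S. (if a < b then \<phi> a b * X a b else 0) - (if b < a then \<phi> b a * X a b else 0))"
    by (simp add: sum_subtractf)
  also have "\<dots> = (\<Sum>a\<in>S. \<Sum>b\<in>S. \<phi> a b * X a b)"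
  proof (intro sum.cong refl)
    fix a b
    show "(if a < b then \<phi> a b * X a b else 0) - (if b < a then \<phi> b a * X a b else 0) = \<phi> a b * X a b"
    proof (cases a b rule: linorder_cases)
      case equal thus ?thesis by (simp add: d)
    next
      case greater
      hence "\<not> a < b" by simp
      thus ?thesis using greater as[of b a] by simp
    next
      case less
      hence "\<not> b < a" by simp
      thus ?thesis using less by simp
    qed
  qed
  finally show ?thesis .
qed

lemma w12_w21: "w12 a B p q u = w21 B a p q u"
  by (simp add: w12_def w21_def algebra_simps)

lemma lin1_if: "lin1 n F1 \<Longrightarrow> lin1 n (\<lambda>x. if P then F1 x else 0)"
  by (cases P) (simp_all add: lin1_const0)

lemma Tf_neg2: "Tf A g x (\<lambda>k. - h k) = - Tf A g x h"
  by (simp add: Tf_def algebra_simps)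

lemma wedge_collapse:
  assumes fin: "finite S" and ab: "a \<in> S" "b \<in> S"
  shows "(\<Sum>g\<in>S. \<Sum>e\<in>S. F g e * wedge (unitv g) (unitv e) a b) = F a b - F b a"
proof -
  have inner: "(\<Sum>e\<in>S. F g e * wedge (unitv g) (unitv e) a b) = (if a = g then F g b else 0) - (if b = g then F g a else 0)" for g
  proof -
    have "(\<Sum>e\<in>S. F g e * wedge (unitv g) (unitv e) a b)
      = (\<Sum>e\<in>S. (if a = g then (if b = e then F g e else 0) else 0) - (if b = g then (if a = e then F g e else 0) else 0))"
      by (rule sum.cong) (auto simp: wedge_def unitv_def)
    also have "\<dots> = (if a = g then F g b else 0) - (if b = g then F g a else 0)"
      using fin ab by (cases "a = g"; cases "b = g") (simp_all add: sum_subtractf sum_negf)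
    finally show ?thesis .
  qed
  show ?thesis unfolding inner using fin ab by (simp add: sum_subtractf)
qed

lemma phiv_lin: "lin1 n (\<lambda>v. phiv n \<phi> v a b)"
  unfolding lin1_def
proof
  fix v
  have "phiv n \<phi> (unitv i) a b = \<phi> i a b" if "i < n" for i
  proof -
    have "(\<Sum>j<n. unitv i j * \<phi> j a b) = (\<Sum>j<n. if i = j then \<phi> j a b else 0)"
      by (rule sum.cong) (auto simp: unitv_def)
    thus ?thesis using that by (simp add: phiv_def)
  qed
  thus "phiv n \<phi> v a b = (\<Sum>i<n. v i * phiv n \<phi> (unitv i) a b)" by (simp add: phiv_def)
qed

context C begin

lemma CJT: assumes "x \<in> basis n A" "P \<in> basis n A" "Q \<in> basis n A" "U \<in> basis n A"
  shows "(\<Sum>r\<in>basis n A. \<delta> x r U * \<delta> r P Q + \<delta> x r P * \<delta> r Q U + \<delta> x r Q * \<delta> r U P) = 0"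
proof -
  have "(\<Sum>r\<in>basis n A. \<Sum>s\<in>basis n A. \<delta> x r s * (w21 (\<delta> r) (unitv s) P Q U - w12 (unitv r) (\<delta> s) P Q U)) = 0"
    using CJ assms unfolding cojac_def by blast
  hence "2 * (\<Sum>r\<in>basis n A. \<delta> x r U * \<delta> r P Q + \<delta> x r P * \<delta> r Q U + \<delta> x r Q * \<delta> r U P) = 0"
    using cojac_simp[of "basis n A" \<delta> x P Q U, OF finB asd[OF assms(1)] assms(2-4)] by simp
  thus ?thesis by simp
qed

lemma cj_z: "cojac A (dz \<delta>)"
  unfolding cojac_def
proof (intro ballI)
  fix g p q u assume g: "g \<in> A" and pqu: "p \<in> A" "q \<in> A" "u \<in> A"
  have "(\<Sum>r\<in>basis n A. \<Sum>s\<in>basis n A. \<delta> (Ed g) r s * (w21 (\<delta> r) (unitv s) (Ed p) (Ed q) (Ed u) - w12 (unitv r) (\<delta> s) (Ed p) (Ed q) (Ed u))) = 0"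
    using CJ g pqu unfolding cojac_def by simp
  moreover have "(\<Sum>r\<in>basis n A. \<Sum>s\<in>basis n A. \<delta> (Ed g) r s * (w21 (\<delta> r) (unitv s) (Ed p) (Ed q) (Ed u) - w12 (unitv r) (\<delta> s) (Ed p) (Ed q) (Ed u)))
    = (\<Sum>r\<in>A. \<Sum>s\<in>A. dz \<delta> g r s * (w21 (dz \<delta> r) (unitv s) p q u - w12 (unitv r) (dz \<delta> s) p q u))"
    unfolding sum_basis by (simp add: EV0[OF g] EV0'[OF g] dz_def w21_def w12_def unitv_def)
  ultimately show "(\<Sum>r\<in>A. \<Sum>s\<in>A. dz \<delta> g r s * (w21 (dz \<delta> r) (unitv s) p q u - w12 (unitv r) (dz \<delta> s) p q u)) = 0"
    by simp
qed

lemma comm: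
  assumes a: "a \<in> A" and b: "b \<in> A" and t: "t < n" and c: "c < n"
  shows "mmul n (DD \<delta> a) (DD \<delta> b) t c - mmul n (DD \<delta> b) (DD \<delta> a) t c = (\<Sum>g\<in>A. dz \<delta> g a b * DD \<delta> g t c)"
proof -
  let ?T = "\<lambda>r. \<delta> (Vx c) r (Ed b) * \<delta> r (Vx t) (Ed a) + \<delta> (Vx c) r (Vx t) * \<delta> r (Ed a) (Ed b) + \<delta> (Vx c) r (Ed a) * \<delta> r (Ed b) (Vx t)"
  have T0: "(\<Sum>r\<in>basis n A. ?T r) = 0" using CJT[of "Vx c" "Vx t" "Ed a" "Ed b"] a b t c by simp
  have vp: "(\<Sum>k<n. ?T (Vx k)) = (\<Sum>k<n. DD \<delta> b k c * DD \<delta> a t k - DD \<delta> a k c * DD \<delta> b t k)"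
  proof (rule sum.cong[OF refl])
    fix k assume "k \<in> {..<n}"
    hence k: "k < n" by simp
    have e1: "\<delta> (Vx k) (Ed b) (Vx t) = - \<delta> (Vx k) (Vx t) (Ed b)" by (rule asd) (simp add: k)
    show "?T (Vx k) = DD \<delta> b k c * DD \<delta> a t k - DD \<delta> a k c * DD \<delta> b t k"
      unfolding e1 by (simp add: vv0[OF c] DD_def)
  qed
  have ep: "(\<Sum>g\<in>A. ?T (Ed g)) = (\<Sum>g\<in>A. - (dz \<delta> g a b * DD \<delta> g t c))"
  proof (rule sum.cong[OF refl])
    fix g assume g: "g \<in> A"
    have e1: "\<delta> (Vx c) (Ed g) (Vx t) = - \<delta> (Vx c) (Vx t) (Ed g)" by (rule asd) (simp add: c)
    show "?T (Ed g) = - (dz \<delta> g a b * DD \<delta> g t c)"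
      unfolding e1 by (simp add: EV0[OF g] EV0'[OF g] DD_def dz_def)
  qed
  have "(\<Sum>k<n. DD \<delta> b k c * DD \<delta> a t k - DD \<delta> a k c * DD \<delta> b t k) + (\<Sum>g\<in>A. - (dz \<delta> g a b * DD \<delta> g t c)) = 0"
    using T0 unfolding sum_basis vp ep .
  moreover have "(\<Sum>k<n. DD \<delta> b k c * DD \<delta> a t k - DD \<delta> a k c * DD \<delta> b t k)
     = mmul n (DD \<delta> a) (DD \<delta> b) t c - mmul n (DD \<delta> b) (DD \<delta> a) t c"
    by (simp add: mmul_def sum_subtractf mult.commute)
  moreover have "(\<Sum>g\<in>A. - (dz \<delta> g a b * DD \<delta> g t c)) = - (\<Sum>g\<in>A. dz \<delta> g a b * DD \<delta> g t c)"
    by (rule sum_negf)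
  ultimately show ?thesis by (simp add: eq_neg_iff_add_eq_0)
qed

end

lemma phiv_unitv: "i < n \<Longrightarrow> phiv n \<phi> (unitv i) a b = \<phi> i a b"
proof -
  assume i: "i < n"
  have "(\<Sum>j<n. unitv i j * \<phi> j a b) = (\<Sum>j<n. if i = j then \<phi> j a b else 0)"
    by (rule sum.cong) (auto simp: unitv_def)
  thus ?thesis using i by (simp add: phiv_def)
qed

context C begin

lemma adV: assumes i: "i < n" and j: "j < n"
  shows "adL2 n A (unitv (Vx i)) (\<delta> (Vx j)) (Ed a) (Ed b)
     = Tf A a (unitv i) (mapp n (DD \<delta> b) (unitv j)) - Tf A b (unitv i) (mapp n (DD \<delta> a) (unitv j))"
proof -
  have h1: "(\<lambda>k. \<delta> (Vx j) (Vx k) (Ed b)) = mapp n (DD \<delta> b) (unitv j)"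
    by (simp add: mapp_unitv[OF j] DD_def)
  have h2: "(\<lambda>k. \<delta> (Vx j) (Ed a) (Vx k)) = (\<lambda>k. - mapp n (DD \<delta> a) (unitv j) k)"
  proof
    fix k
    have "\<delta> (Vx j) (Ed a) (Vx k) = - \<delta> (Vx j) (Vx k) (Ed a)" by (rule asd) (simp add: j)
    thus "\<delta> (Vx j) (Ed a) (Vx k) = - mapp n (DD \<delta> a) (unitv j) k" by (simp add: mapp_unitv[OF j] DD_def)
  qed
  show ?thesis unfolding adL2_EE h1 h2 Tf_neg2 by simp
qed

lemma Trel:
  assumes a: "a \<in> A" and b: "b \<in> A"
  shows "(\<Sum>g\<in>A. Tf A g x y * dz \<delta> g a b)
    = (\<Sum>g\<in>A. \<Sum>e\<in>A. (Tf A g (mapp n (DD \<delta> e) x) y + Tf A g x (mapp n (DD \<delta> e) y)) * wedge (unitv g) (unitv e) a b)"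
proof -
  let ?R = "\<lambda>x y. (Tf A a (mapp n (DD \<delta> b) x) y + Tf A a x (mapp n (DD \<delta> b) y)) - (Tf A b (mapp n (DD \<delta> a) x) y + Tf A b x (mapp n (DD \<delta> a) y))"
  define F where "F = (\<lambda>x y. (\<Sum>g\<in>A. Tf A g x y * dz \<delta> g a b) - ?R x y)"
  have col: "(\<Sum>g\<in>A. \<Sum>e\<in>A. (Tf A g (mapp n (DD \<delta> e) x) y + Tf A g x (mapp n (DD \<delta> e) y)) * wedge (unitv g) (unitv e) a b) = ?R x y"
    by (rule wedge_collapse[OF finA a b])
  have base: "F (unitv i) (unitv j) = 0" if i: "i < n" and j: "j < n" for i j
  proof -
    have "(\<Sum>r\<in>basis n A. br A (unitv (Vx i)) (unitv (Vx j)) r * \<delta> r (Ed a) (Ed b))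
       = (\<Sum>g\<in>A. Tf A g (unitv i) (unitv j) * dz \<delta> g a b)"
      unfolding sum_basis by (simp add: br_VV dz_def)
    hence "(\<Sum>g\<in>A. Tf A g (unitv i) (unitv j) * dz \<delta> g a b)
      = (Tf A a (unitv i) (mapp n (DD \<delta> b) (unitv j)) - Tf A b (unitv i) (mapp n (DD \<delta> a) (unitv j)))
      - (Tf A a (unitv j) (mapp n (DD \<delta> b) (unitv i)) - Tf A b (unitv j) (mapp n (DD \<delta> a) (unitv i)))"
      using CC[of "Vx i" "Vx j" "Ed a" "Ed b"] i j adV[OF i j] adV[OF j i] by simp
    moreover have "Tf A a (mapp n (DD \<delta> b) (unitv i)) (unitv j) = - Tf A a (unitv j) (mapp n (DD \<delta> b) (unitv i))"
      by (rule Tf_anti)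
    moreover have "Tf A b (mapp n (DD \<delta> a) (unitv i)) (unitv j) = - Tf A b (unitv j) (mapp n (DD \<delta> a) (unitv i))"
      by (rule Tf_anti)
    ultimately show ?thesis unfolding F_def by (simp add: algebra_simps)
  qed
  have l1: "lin1 n (\<lambda>x. F x y)" for y
    unfolding F_def by (intro lin1_diff lin1_add lin1_sum[OF finA] lin1_cmul lin_Tf1 lin_Tfm1)
  have l2: "lin1 n (\<lambda>y. F x y)" for x
    unfolding F_def by (intro lin1_diff lin1_add lin1_sum[OF finA] lin1_cmul lin_Tf2 lin_Tfm2)
  have Fi: "F (unitv i) y = 0" if "i < n" for i
    using lin1_zero[OF l2[of "unitv i"] base[OF that]] by simp
  have "F x y = 0" using lin1_zero[OF l1[of y] Fi] by simp
  thus ?thesis unfolding col F_def by simp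
qed

lemma Phrel:
  assumes p: "p \<in> A" and q: "q \<in> A" and u: "u \<in> A"
  shows "(\<Sum>g\<in>A. w21 (phiv n (ph \<delta>) (mapp n (DD \<delta> g) v)) (unitv g) p q u)
       + (\<Sum>a\<in>A. \<Sum>b\<in>A. if a < b then phiv n (ph \<delta>) v a b
             * (w21 (dz \<delta> a) (unitv b) p q u - w12 (unitv a) (dz \<delta> b) p q u) else 0) = 0"
proof -
  define G where "G = (\<lambda>v. (\<Sum>g\<in>A. w21 (phiv n (ph \<delta>) (mapp n (DD \<delta> g) v)) (unitv g) p q u)
       + (\<Sum>a\<in>A. \<Sum>b\<in>A. if a < b then phiv n (ph \<delta>) v a b
             * (w21 (dz \<delta> a) (unitv b) p q u - w12 (unitv a) (dz \<delta> b) p q u) else 0))"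
  have lc: "lin1 n (\<lambda>v. phiv n (ph \<delta>) (mapp n M v) a b)" for M a b
    by (rule lin_comp[OF phiv_lin mapp_lin])
  have lG: "lin1 n G"
    unfolding G_def w21_def
    by (intro lin1_add lin1_sum[OF finA] lin1_cmul lin1_if lc phiv_lin)
  have base: "G (unitv c) = 0" if c: "c < n" for c
  proof -
    let ?T = "\<lambda>r. \<delta> (Vx c) r (Ed u) * \<delta> r (Ed p) (Ed q) + \<delta> (Vx c) r (Ed p) * \<delta> r (Ed q) (Ed u) + \<delta> (Vx c) r (Ed q) * \<delta> r (Ed u) (Ed p)"
    have T0: "(\<Sum>r\<in>basis n A. ?T r) = 0" using CJT[of "Vx c" "Ed p" "Ed q" "Ed u"] c p q u by simp
    have T1: "(\<Sum>r\<in>basis n A. ?T r) =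
      (\<Sum>k<n. DD \<delta> u k c * ph \<delta> k p q + DD \<delta> p k c * ph \<delta> k q u + DD \<delta> q k c * ph \<delta> k u p)
      + (\<Sum>g\<in>A. ph \<delta> c g u * dz \<delta> g p q + ph \<delta> c g p * dz \<delta> g q u + ph \<delta> c g q * dz \<delta> g u p)"
      unfolding sum_basis by (simp add: DD_def ph_def dz_def)
    define X where "X = (\<lambda>g a b. \<Sum>i<n. DD \<delta> g i c * ph \<delta> i a b)"
    have m: "phiv n (ph \<delta>) (mapp n (DD \<delta> g) (unitv c)) = X g" for g
      unfolding mapp_unitv[OF c] by (simp add: phiv_def X_def)
    have P1: "(\<Sum>g\<in>A. w21 (phiv n (ph \<delta>) (mapp n (DD \<delta> g) (unitv c))) (unitv g) p q u)
       = (\<Sum>k<n. DD \<delta> u k c * ph \<delta> k p q + DD \<delta> p k c * ph \<delta> k q u + DD \<delta> q k c * ph \<delta> k u p)"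
    proof -
      have "(\<Sum>g\<in>A. w21 (phiv n (ph \<delta>) (mapp n (DD \<delta> g) (unitv c))) (unitv g) p q u)
         = (\<Sum>g\<in>A. X g p q * unitv g u) + (\<Sum>g\<in>A. X g q u * unitv g p) + (\<Sum>g\<in>A. X g u p * unitv g q)"
        unfolding m w21_def by (simp add: sum.distrib)
      also have "\<dots> = X u p q + X p q u + X q u p" using p q u finA by (simp add: sum_unitv_r)
      also have "\<dots> = (\<Sum>k<n. DD \<delta> u k c * ph \<delta> k p q + DD \<delta> p k c * ph \<delta> k q u + DD \<delta> q k c * ph \<delta> k u p)"
        by (simp add: X_def sum.distrib)
      finally show ?thesis .
    qed
    have asph: "ph \<delta> c a b = - ph \<delta> c b a" for a b
      unfolding ph_def by (rule asd) (simp add: c)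
    have P2: "(\<Sum>a\<in>A. \<Sum>b\<in>A. if a < b then phiv n (ph \<delta>) (unitv c) a b
             * (w21 (dz \<delta> a) (unitv b) p q u - w12 (unitv a) (dz \<delta> b) p q u) else 0)
       = (\<Sum>g\<in>A. ph \<delta> c g u * dz \<delta> g p q + ph \<delta> c g p * dz \<delta> g q u + ph \<delta> c g q * dz \<delta> g u p)"
    proof -
      have "(\<Sum>a\<in>A. \<Sum>b\<in>A. if a < b then phiv n (ph \<delta>) (unitv c) a b
             * (w21 (dz \<delta> a) (unitv b) p q u - w12 (unitv a) (dz \<delta> b) p q u) else 0)
          = (\<Sum>a\<in>A. \<Sum>b\<in>A. if a < b then ph \<delta> c a b
             * (w21 (dz \<delta> a) (unitv b) p q u - w21 (dz \<delta> b) (unitv a) p q u) else 0)"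
        by (simp add: phiv_unitv[OF c] w12_w21 cong: if_cong)
      also have "\<dots> = (\<Sum>a\<in>A. \<Sum>b\<in>A. ph \<delta> c a b * w21 (dz \<delta> a) (unitv b) p q u)"
        by (rule lt_sum[OF finA asph])
      also have "\<dots> = (\<Sum>a\<in>A. ph \<delta> c a u * dz \<delta> a p q + ph \<delta> c a p * dz \<delta> a q u + ph \<delta> c a q * dz \<delta> a u p)"
      proof (rule sum.cong[OF refl])
        fix a assume "a \<in> A"
        have "(\<Sum>b\<in>A. ph \<delta> c a b * w21 (dz \<delta> a) (unitv b) p q u)
          = (\<Sum>b\<in>A. (ph \<delta> c a b * dz \<delta> a p q) * unitv b u) + (\<Sum>b\<in>A. (ph \<delta> c a b * dz \<delta> a q u) * unitv b p)
            + (\<Sum>b\<in>A. (ph \<delta> c a b * dz \<delta> a u p) * unitv b q)"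
          unfolding w21_def sum.distrib[symmetric] by (intro sum.cong refl) (simp add: algebra_simps)
        also have "\<dots> = ph \<delta> c a u * dz \<delta> a p q + ph \<delta> c a p * dz \<delta> a q u + ph \<delta> c a q * dz \<delta> a u p"
          using p q u finA by (simp add: sum_unitv_r)
        finally show "(\<Sum>b\<in>A. ph \<delta> c a b * w21 (dz \<delta> a) (unitv b) p q u)
          = ph \<delta> c a u * dz \<delta> a p q + ph \<delta> c a p * dz \<delta> a q u + ph \<delta> c a q * dz \<delta> a u p" .
      qed
      finally show ?thesis .
    qed
    show ?thesis unfolding G_def P1 P2 using T0 T1 by simp
  qed
  have "G v = 0" by (rule lin1_zero[OF lG base])
  thus ?thesis unfolding G_def .
qed

end

theorem mainTheorem12:
  fixes n :: nat and A :: "(nat \<times> nat) set"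
  assumes simple: "A \<subseteq> {(i, j). i < j \<and> j < n}"
    and deg: "\<forall>e<n. 2 \<le> card {\<alpha>\<in>A. fst \<alpha> = e \<or> snd \<alpha> = e}"
  shows "(\<forall>B :: gidx \<Rightarrow> gidx \<Rightarrow> 'k::field_char_0. is_L2 n A B \<longrightarrow> (invariant n A B \<longleftrightarrow> in_L2z n A B))
    \<and> tst_type TYPE('k) n A
    \<and> (\<forall>\<delta> :: gidx \<Rightarrow> gidx \<Rightarrow> gidx \<Rightarrow> 'k. cobracket n A \<delta> \<longrightarrow>
         (\<forall>\<gamma>\<in>A. in_L2z n A (\<delta> (Ed \<gamma>)))
       \<and> (\<forall>i<n. in_WZ_L2z n A (\<delta> (Vx i)))
       \<and> (\<exists>(\<delta>z :: nat \<times> nat \<Rightarrow> nat \<times> nat \<Rightarrow> nat \<times> nat \<Rightarrow> 'k)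
            (D :: nat \<times> nat \<Rightarrow> nat \<Rightarrow> nat \<Rightarrow> 'k)
            (\<phi> :: nat \<Rightarrow> nat \<times> nat \<Rightarrow> nat \<times> nat \<Rightarrow> 'k).
            (\<forall>\<gamma>\<in>A. \<delta> (Ed \<gamma>) = zmat (\<delta>z \<gamma>))
          \<and> (\<forall>i<n. \<delta> (Vx i) = (\<lambda>p q. (\<Sum>\<alpha>\<in>A. wedge (wvec n (\<lambda>r. D \<alpha> r i)) (unitv (Ed \<alpha>)) p q)
                                        + zmat (\<phi> i) p q))
          \<and> cojac A \<delta>z
          \<and> (\<forall>\<alpha>\<in>A. \<forall>\<beta>\<in>A. \<alpha> < \<beta> \<longrightarrow> (\<forall>r<n. \<forall>c<n.
                mmul n (D \<alpha>) (D \<beta>) r c - mmul n (D \<beta>) (D \<alpha>) r c = (\<Sum>\<gamma>\<in>A. \<delta>z \<gamma> \<alpha> \<beta> * D \<gamma> r c)))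
          \<and> (\<forall>x y :: nat \<Rightarrow> 'k. \<forall>a\<in>A. \<forall>b\<in>A.
                (\<Sum>\<gamma>\<in>A. Tf A \<gamma> x y * \<delta>z \<gamma> a b)
                = (\<Sum>\<gamma>\<in>A. \<Sum>\<eta>\<in>A. (Tf A \<gamma> (mapp n (D \<eta>) x) y + Tf A \<gamma> x (mapp n (D \<eta>) y))
                                     * wedge (unitv \<gamma>) (unitv \<eta>) a b))
          \<and> (\<forall>v :: nat \<Rightarrow> 'k. \<forall>p\<in>A. \<forall>q\<in>A. \<forall>u\<in>A.
                (\<Sum>\<gamma>\<in>A. w21 (phiv n \<phi> (mapp n (D \<gamma>) v)) (unitv \<gamma>) p q u)
              + (\<Sum>\<alpha>\<in>A. \<Sum>\<beta>\<in>A. if \<alpha> < \<beta> then phiv n \<phi> v \<alpha> \<beta>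
                     * (w21 (\<delta>z \<alpha>) (unitv \<beta>) p q u - w12 (unitv \<alpha>) (\<delta>z \<beta>) p q u) else 0)
              = 0)))"
proof -
  have Gi: "G n A" by (rule G.intro[OF simple deg])
  interpret G n A by (rule Gi)
  have P1: "\<forall>B :: gidx \<Rightarrow> gidx \<Rightarrow> 'k::field_char_0. is_L2 n A B \<longrightarrow> (invariant n A B \<longleftrightarrow> in_L2z n A B)"
  proof (intro allI impI iffI)
    fix B :: "gidx \<Rightarrow> gidx \<Rightarrow> 'k" assume L: "is_L2 n A B"
    { assume "invariant n A B"
      hence "\<forall>i<n. \<forall>p q. adL2 n A (unitv (Vx i)) B p q = 0" unfolding invariant_def by blast
      thus "in_L2z n A B" by (rule L2z_of_vinv[OF L]) }
    { assume "in_L2z n A B" thus "invariant n A B" by (rule L2z_inv) }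
  qed
  have P2: "tst_type TYPE('k) n A" by (rule tst)
  have P3: "\<forall>\<delta> :: gidx \<Rightarrow> gidx \<Rightarrow> gidx \<Rightarrow> 'k. cobracket n A \<delta> \<longrightarrow>
         (\<forall>\<gamma>\<in>A. in_L2z n A (\<delta> (Ed \<gamma>)))
       \<and> (\<forall>i<n. in_WZ_L2z n A (\<delta> (Vx i)))
       \<and> (\<exists>(\<delta>z :: nat \<times> nat \<Rightarrow> nat \<times> nat \<Rightarrow> nat \<times> nat \<Rightarrow> 'k)
            (D :: nat \<times> nat \<Rightarrow> nat \<Rightarrow> nat \<Rightarrow> 'k)
            (\<phi> :: nat \<Rightarrow> nat \<times> nat \<Rightarrow> nat \<times> nat \<Rightarrow> 'k).
            (\<forall>\<gamma>\<in>A. \<delta> (Ed \<gamma>) = zmat (\<delta>z \<gamma>))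
          \<and> (\<forall>i<n. \<delta> (Vx i) = (\<lambda>p q. (\<Sum>\<alpha>\<in>A. wedge (wvec n (\<lambda>r. D \<alpha> r i)) (unitv (Ed \<alpha>)) p q)
                                        + zmat (\<phi> i) p q))
          \<and> cojac A \<delta>z
          \<and> (\<forall>\<alpha>\<in>A. \<forall>\<beta>\<in>A. \<alpha> < \<beta> \<longrightarrow> (\<forall>r<n. \<forall>c<n.
                mmul n (D \<alpha>) (D \<beta>) r c - mmul n (D \<beta>) (D \<alpha>) r c = (\<Sum>\<gamma>\<in>A. \<delta>z \<gamma> \<alpha> \<beta> * D \<gamma> r c)))
          \<and> (\<forall>x y :: nat \<Rightarrow> 'k. \<forall>a\<in>A. \<forall>b\<in>A.
                (\<Sum>\<gamma>\<in>A. Tf A \<gamma> x y * \<delta>z \<gamma> a b)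
                = (\<Sum>\<gamma>\<in>A. \<Sum>\<eta>\<in>A. (Tf A \<gamma> (mapp n (D \<eta>) x) y + Tf A \<gamma> x (mapp n (D \<eta>) y))
                                     * wedge (unitv \<gamma>) (unitv \<eta>) a b))
          \<and> (\<forall>v :: nat \<Rightarrow> 'k. \<forall>p\<in>A. \<forall>q\<in>A. \<forall>u\<in>A.
                (\<Sum>\<gamma>\<in>A. w21 (phiv n \<phi> (mapp n (D \<gamma>) v)) (unitv \<gamma>) p q u)
              + (\<Sum>\<alpha>\<in>A. \<Sum>\<beta>\<in>A. if \<alpha> < \<beta> then phiv n \<phi> v \<alpha> \<beta>
                     * (w21 (\<delta>z \<alpha>) (unitv \<beta>) p q u - w12 (unitv \<alpha>) (\<delta>z \<beta>) p q u) else 0)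
              = 0))"
  proof (intro allI impI)
    fix \<delta> :: "gidx \<Rightarrow> gidx \<Rightarrow> gidx \<Rightarrow> 'k" assume cb: "cobracket n A \<delta>"
    interpret C n A \<delta> by (rule C.intro[OF Gi C_axioms.intro[OF cb]])
    have Q1: "\<forall>\<gamma>\<in>A. in_L2z n A (\<delta> (Ed \<gamma>))" using edge_L2z by blast
    have Q2: "\<forall>i<n. in_WZ_L2z n A (\<delta> (Vx i))"
      unfolding in_WZ_L2z_def using L2d vv0 by simp
    show "(\<forall>\<gamma>\<in>A. in_L2z n A (\<delta> (Ed \<gamma>)))
       \<and> (\<forall>i<n. in_WZ_L2z n A (\<delta> (Vx i)))
       \<and> (\<exists>(\<delta>z :: nat \<times> nat \<Rightarrow> nat \<times> nat \<Rightarrow> nat \<times> nat \<Rightarrow> 'k)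
            (D :: nat \<times> nat \<Rightarrow> nat \<Rightarrow> nat \<Rightarrow> 'k)
            (\<phi> :: nat \<Rightarrow> nat \<times> nat \<Rightarrow> nat \<times> nat \<Rightarrow> 'k).
            (\<forall>\<gamma>\<in>A. \<delta> (Ed \<gamma>) = zmat (\<delta>z \<gamma>))
          \<and> (\<forall>i<n. \<delta> (Vx i) = (\<lambda>p q. (\<Sum>\<alpha>\<in>A. wedge (wvec n (\<lambda>r. D \<alpha> r i)) (unitv (Ed \<alpha>)) p q)
                                        + zmat (\<phi> i) p q))
          \<and> cojac A \<delta>z
          \<and> (\<forall>\<alpha>\<in>A. \<forall>\<beta>\<in>A. \<alpha> < \<beta> \<longrightarrow> (\<forall>r<n. \<forall>c<n.
                mmul n (D \<alpha>) (D \<beta>) r c - mmul n (D \<beta>) (D \<alpha>) r c = (\<Sum>\<gamma>\<in>A. \<delta>z \<gamma> \<alpha> \<beta> * D \<gamma> r c)))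
          \<and> (\<forall>x y :: nat \<Rightarrow> 'k. \<forall>a\<in>A. \<forall>b\<in>A.
                (\<Sum>\<gamma>\<in>A. Tf A \<gamma> x y * \<delta>z \<gamma> a b)
                = (\<Sum>\<gamma>\<in>A. \<Sum>\<eta>\<in>A. (Tf A \<gamma> (mapp n (D \<eta>) x) y + Tf A \<gamma> x (mapp n (D \<eta>) y))
                                     * wedge (unitv \<gamma>) (unitv \<eta>) a b))
          \<and> (\<forall>v :: nat \<Rightarrow> 'k. \<forall>p\<in>A. \<forall>q\<in>A. \<forall>u\<in>A.
                (\<Sum>\<gamma>\<in>A. w21 (phiv n \<phi> (mapp n (D \<gamma>) v)) (unitv \<gamma>) p q u)
              + (\<Sum>\<alpha>\<in>A. \<Sum>\<beta>\<in>A. if \<alpha> < \<beta> then phiv n \<phi> v \<alpha> \<beta>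
                     * (w21 (\<delta>z \<alpha>) (unitv \<beta>) p q u - w12 (unitv \<alpha>) (\<delta>z \<beta>) p q u) else 0)
              = 0))"
    proof (intro conjI Q1 Q2 exI[of _ "dz \<delta>"] exI[of _ "DD \<delta>"] exI[of _ "ph \<delta>"])
      show "\<forall>\<gamma>\<in>A. \<delta> (Ed \<gamma>) = zmat (dz \<delta> \<gamma>)" using rep_E by blast
      show "\<forall>i<n. \<delta> (Vx i) = (\<lambda>p q. (\<Sum>\<alpha>\<in>A. wedge (wvec n (\<lambda>r. DD \<delta> \<alpha> r i)) (unitv (Ed \<alpha>)) p q) + zmat (ph \<delta> i) p q)"
        using rep_V by blast
      show "cojac A (dz \<delta>)" by (rule cj_z)
      show "\<forall>\<alpha>\<in>A. \<forall>\<beta>\<in>A. \<alpha> < \<beta> \<longrightarrow> (\<forall>r<n. \<forall>c<n.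
                mmul n (DD \<delta> \<alpha>) (DD \<delta> \<beta>) r c - mmul n (DD \<delta> \<beta>) (DD \<delta> \<alpha>) r c = (\<Sum>\<gamma>\<in>A. dz \<delta> \<gamma> \<alpha> \<beta> * DD \<delta> \<gamma> r c))"
        using comm by blast
      show "\<forall>x y :: nat \<Rightarrow> 'k. \<forall>a\<in>A. \<forall>b\<in>A.
                (\<Sum>\<gamma>\<in>A. Tf A \<gamma> x y * dz \<delta> \<gamma> a b)
                = (\<Sum>\<gamma>\<in>A. \<Sum>\<eta>\<in>A. (Tf A \<gamma> (mapp n (DD \<delta> \<eta>) x) y + Tf A \<gamma> x (mapp n (DD \<delta> \<eta>) y))
                                     * wedge (unitv \<gamma>) (unitv \<eta>) a b)"
        using Trel by blast
      show "\<forall>v :: nat \<Rightarrow> 'k. \<forall>p\<in>A. \<forall>q\<in>A. \<forall>u\<in>A.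
                (\<Sum>\<gamma>\<in>A. w21 (phiv n (ph \<delta>) (mapp n (DD \<delta> \<gamma>) v)) (unitv \<gamma>) p q u)
              + (\<Sum>\<alpha>\<in>A. \<Sum>\<beta>\<in>A. if \<alpha> < \<beta> then phiv n (ph \<delta>) v \<alpha> \<beta>
                     * (w21 (dz \<delta> \<alpha>) (unitv \<beta>) p q u - w12 (unitv \<alpha>) (dz \<delta> \<beta>) p q u) else 0)
              = 0"
        using Phrel by blast
    qed
  qed
  show ?thesis using P1 P2 P3 by blast
qed

end
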